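(* Let $\tau$ be a $\sigma$-maxitive measure on a $\sigma$-algebra $\mathcal{B}$ of subsets of a nonempty set $E$. Then the following are equivalent: - $\tau$ has the Radon–Nikodym property with respect to the Shilkret integral, i.e. every $\sigma$-maxitive measure $\nu$ on $\mathcal{B}$ with $\nu\ll\tau$ admits a $\mathcal{B}$-measurable $c:E\to[0,\infty]$ with $\nu(B)=\sup_{t\ge0} t\cdot\tau(B\cap\{c>t\})$ for all $B\in\mathcal{B}$; - $\tau$ is $\sigma$-finite and $\sigma$-principal.
   Context: Multiplication on $[0,\infty]$ is the usual one, with the convention $0\cdot\infty=\infty\cdot0=0$. A $\sigma$-maxitive measure on $\mathcal{B}$ is a map $\nu:\mathcal{B}\to[0,\infty]$ with $\nu(\emptyset)=0$ and $\nu(\bigcup_j B_j)=\sup_j\nu(B_j)$ for every countable family $(B_j)$ in $\mathcal{B}$. A map $f:E\to[0,\infty]$ is $\mathcal{B}$-measurable if $\{f>t\}\in\mathcal{B}$ for all $t\in[0,\infty)$. Absolute continuity: $\nu\ll\tau$ means $\nu(B)\le\infty\cdot\tau(B)$ for every $B\in\mathcal{B}$ with $\tau(B)<\infty$; equivalently, $\tau(B)=0$ implies $\nu(B)=0$ for such $B$. $\tau$ is $\sigma$-finite if $E$ is covered by countably many $B_n\in\mathcal{B}$ with $\tau(B_n)<\infty$. A $\sigma$-ideal of $\mathcal{B}$ is a nonempty subfamily closed under countable unions and under passing to measurable subsets. A set is $\tau$-negligible if it is contained in some $B\in\mathcal{B}$ with $\tau(B)=0$. $\tau$ is $\sigma$-principal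 if for every $\sigma$-ideal $\mathcal{I}$ of $\mathcal{B}$ there is $L\in\mathcal{I}$ such that $S\setminus L$ is $\tau$-negligible for all $S\in\mathcal{I}$. *)

theory Defs
  imports "HOL-Analysis.Analysis"
begin

text \<open>Set functions take values in ennreal = [0,\<infinity>], where 0 * \<infinity> = 0.
  The \<sigma>-algebra is a family M of subsets of the ground set E.\<close>

definition sigma_maxitive :: "'a set set \<Rightarrow> ('a set \<Rightarrow> ennreal) \<Rightarrow> bool" where
  "sigma_maxitive M \<nu> \<longleftrightarrow> \<nu> {} = 0 \<and>
     (\<forall>F :: nat \<Rightarrow> 'a set. range F \<subseteq> M \<longrightarrow> \<nu> (\<Union>j. F j) = (SUP j. \<nu> (F j)))"

definition abs_cont :: "'a set set \<Rightarrow> ('a set \<Rightarrow> ennreal) \<Rightarrow> ('a set \<Rightarrow> ennreal) \<Rightarrow> bool" where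
  "abs_cont M \<nu> \<tau> \<longleftrightarrow> (\<forall>B\<in>M. \<tau> B < \<infinity> \<longrightarrow> \<nu> B \<le> \<infinity> * \<tau> B)"

definition maxitive_measurable :: "'a set \<Rightarrow> 'a set set \<Rightarrow> ('a \<Rightarrow> ennreal) \<Rightarrow> bool" where
  "maxitive_measurable E M f \<longleftrightarrow> (\<forall>t::ennreal. t < \<infinity> \<longrightarrow> {x\<in>E. t < f x} \<in> M)"

definition shilkret :: "'a set \<Rightarrow> ('a set \<Rightarrow> ennreal) \<Rightarrow> ('a \<Rightarrow> ennreal) \<Rightarrow> 'a set \<Rightarrow> ennreal" where
  "shilkret E \<tau> c B = (SUP t\<in>{t::ennreal. t < \<infinity>}. t * \<tau> (B \<inter> {x\<in>E. t < c x}))"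

definition radon_nikodym_property :: "'a set \<Rightarrow> 'a set set \<Rightarrow> ('a set \<Rightarrow> ennreal) \<Rightarrow> bool" where
  "radon_nikodym_property E M \<tau> \<longleftrightarrow>
     (\<forall>\<nu>. sigma_maxitive M \<nu> \<and> abs_cont M \<nu> \<tau> \<longrightarrow>
        (\<exists>c. maxitive_measurable E M c \<and> (\<forall>B\<in>M. \<nu> B = shilkret E \<tau> c B)))"

definition maxitive_sigma_finite :: "'a set \<Rightarrow> 'a set set \<Rightarrow> ('a set \<Rightarrow> ennreal) \<Rightarrow> bool" where
  "maxitive_sigma_finite E M \<tau> \<longleftrightarrow>
     (\<exists>F :: nat \<Rightarrow> 'a set. range F \<subseteq> M \<and> (\<forall>n. \<tau> (F n) < \<infinity>) \<and> E \<subseteq> (\<Union>n. F n))"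

definition sigma_ideal :: "'a set set \<Rightarrow> 'a set set \<Rightarrow> bool" where
  "sigma_ideal M I \<longleftrightarrow> I \<subseteq> M \<and> I \<noteq> {} \<and>
     (\<forall>F :: nat \<Rightarrow> 'a set. range F \<subseteq> I \<longrightarrow> (\<Union>j. F j) \<in> I) \<and>
     (\<forall>S\<in>I. \<forall>T\<in>M. T \<subseteq> S \<longrightarrow> T \<in> I)"

definition negligible_wrt :: "'a set set \<Rightarrow> ('a set \<Rightarrow> ennreal) \<Rightarrow> 'a set \<Rightarrow> bool" where
  "negligible_wrt M \<tau> S \<longleftrightarrow> (\<exists>B\<in>M. \<tau> B = 0 \<and> S \<subseteq> B)"

definition sigma_principal :: "'a set set \<Rightarrow> ('a set \<Rightarrow> ennreal) \<Rightarrow> bool" where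
  "sigma_principal M \<tau> \<longleftrightarrow>
     (\<forall>I. sigma_ideal M I \<longrightarrow> (\<exists>L\<in>I. \<forall>S\<in>I. negligible_wrt M \<tau> (S - L)))"

end

theory Submission
  imports Defs
begin


lemma sm_empty: "sigma_maxitive M \<nu> \<Longrightarrow> \<nu> {} = 0"
  by (simp add: sigma_maxitive_def)

lemma sm_UN:
  fixes F :: "nat \<Rightarrow> 'a set"
  assumes "sigma_maxitive M \<nu>" "range F \<subseteq> M" shows "\<nu> (\<Union>j. F j) = (SUP j. \<nu> (F j))"
proof -
  have "\<forall>F :: nat \<Rightarrow> 'a set. range F \<subseteq> M \<longrightarrow> \<nu> (\<Union>j. F j) = (SUP j. \<nu> (F j))"
    using assms(1) unfolding sigma_maxitive_def by (rule conjunct2)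
  then have "range F \<subseteq> M \<longrightarrow> \<nu> (\<Union>j. F j) = (SUP j. \<nu> (F j))" by (rule spec)
  then show ?thesis using assms(2) by (rule mp)
qed

lemma sm_Un:
  assumes "sigma_maxitive M \<nu>" "A \<in> M" "B \<in> M"
  shows "\<nu> (A \<union> B) = max (\<nu> A) (\<nu> B)"
proof -
  define F where "F = (\<lambda>n::nat. if n = 0 then A else B)"
  have r: "range F \<subseteq> M" using assms by (auto simp: F_def)
  have u: "(\<Union>j. F j) = A \<union> B" by (auto simp: F_def split: if_splits)
  have s: "(SUP j. \<nu> (F j)) = max (\<nu> A) (\<nu> B)"
  proof (rule antisym)
    show "(SUP j. \<nu> (F j)) \<le> max (\<nu> A) (\<nu> B)"
      by (rule SUP_least) (simp add: F_def)
    have "\<nu> A \<le> (SUP j. \<nu> (F j))" using SUP_upper[of 0 UNIV "\<lambda>j. \<nu> (F j)"] by (simp add: F_def)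
    moreover have "\<nu> B \<le> (SUP j. \<nu> (F j))" using SUP_upper[of 1 UNIV "\<lambda>j. \<nu> (F j)"] by (simp add: F_def)
    ultimately show "max (\<nu> A) (\<nu> B) \<le> (SUP j. \<nu> (F j))" by simp
  qed
  show ?thesis using sm_UN[OF assms(1) r] unfolding u s .
qed

lemma sm_mono:
  assumes "sigma_maxitive M \<nu>" "A \<in> M" "B \<in> M" "A \<subseteq> B"
  shows "\<nu> A \<le> \<nu> B"
proof -
  have "\<nu> B = max (\<nu> A) (\<nu> B)" using sm_Un[OF assms(1-3)] assms(4)
    by (simp add: Un_absorb1)
  then show ?thesis by (metis max.cobounded1)
qed

lemma sm_countable:
  assumes "sigma_maxitive M \<nu>" "countable K" "\<And>k. k \<in> K \<Longrightarrow> G k \<in> M"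
    "\<And>k. k \<in> K \<Longrightarrow> \<nu> (G k) \<le> s"
  shows "\<nu> (\<Union>k\<in>K. G k) \<le> s"
proof (cases "K = {}")
  case True then show ?thesis using sm_empty[OF assms(1)] by simp
next
  case False
  define F where "F = (\<lambda>n. G (from_nat_into K n))"
  have e: "(\<Union>k\<in>K. G k) = (\<Union>n. F n)"
    unfolding F_def by (metis False assms(2) image_image range_from_nat_into)
  have r: "range F \<subseteq> M" using assms(3) False by (simp add: F_def from_nat_into image_subset_iff)
  have l: "(SUP n. \<nu> (F n)) \<le> s"
    using assms(4) False by (simp add: F_def from_nat_into SUP_least)
  have "\<nu> (\<Union>n. F n) = (SUP n. \<nu> (F n))" by (rule sm_UN[OF assms(1) r])
  from this l show ?thesis unfolding e by (rule ord_eq_le_trans)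
qed

lemma SUP_top_mult:
  fixes a :: ennreal assumes "0 < a"
  shows "(SUP t\<in>{t::ennreal. t < \<infinity>}. t * a) = \<infinity>"
proof -
  have 1: "(SUP n::nat. of_nat n * a) \<le> (SUP t\<in>{t::ennreal. t < \<infinity>}. t * a)"
  proof (rule SUP_least)
    fix n :: nat
    have "of_nat n \<in> {t::ennreal. t < \<infinity>}" by (simp add: of_nat_less_top)
    then show "of_nat n * a \<le> (SUP t\<in>{t::ennreal. t < \<infinity>}. t * a)" by (rule SUP_upper)
  qed
  have 2: "(SUP n::nat. of_nat n * a) = (SUP n::nat. of_nat n) * a"
    by (rule SUP_mult_right_ennreal[symmetric])
  have 3: "(SUP n::nat. (of_nat n :: ennreal)) = \<infinity>"
    using ennreal_SUP_of_nat_eq_top by simp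
  have 4: "\<infinity> * a = \<infinity>" using assms by (simp add: ennreal_top_mult)
  have "\<infinity> \<le> (SUP t\<in>{t::ennreal. t < \<infinity>}. t * a)" using 1 unfolding 2 3 4 .
  then show ?thesis by (simp add: top_unique)
qed

lemma rnD:
  assumes "radon_nikodym_property E M \<tau>" "sigma_maxitive M \<nu>" "abs_cont M \<nu> \<tau>"
  shows "\<exists>c. maxitive_measurable E M c \<and> (\<forall>B\<in>M. \<nu> B = shilkret E \<tau> c B)"
proof -
  have "sigma_maxitive M \<nu> \<and> abs_cont M \<nu> \<tau> \<longrightarrow>
        (\<exists>c. maxitive_measurable E M c \<and> (\<forall>B\<in>M. \<nu> B = shilkret E \<tau> c B))"
    using assms(1) unfolding radon_nikodym_property_def by (rule spec)
  then show ?thesis using assms(2,3) by simp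
qed

lemma mmD:
  assumes "maxitive_measurable E M c" "t < \<infinity>"
  shows "{x\<in>E. t < c x} \<in> M"
proof -
  have "t < \<infinity> \<longrightarrow> {x\<in>E. t < c x} \<in> M"
    using assms(1) unfolding maxitive_measurable_def by (rule spec)
  then show ?thesis using assms(2) by simp
qed

lemma siD:
  assumes "sigma_ideal M I"
  shows "I \<subseteq> M" "I \<noteq> {}"
    "\<And>G :: nat \<Rightarrow> _. range G \<subseteq> I \<Longrightarrow> (\<Union>j. G j) \<in> I"
    "\<And>S T. S \<in> I \<Longrightarrow> T \<in> M \<Longrightarrow> T \<subseteq> S \<Longrightarrow> T \<in> I"
proof -
  show "I \<subseteq> M" "I \<noteq> {}" using assms unfolding sigma_ideal_def by simp_all
  fix G :: "nat \<Rightarrow> _" assume G: "range G \<subseteq> I"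
  have "\<forall>F :: nat \<Rightarrow> _. range F \<subseteq> I \<longrightarrow> (\<Union>j. F j) \<in> I"
    using assms unfolding sigma_ideal_def by (rule conjunct1[OF conjunct2[OF conjunct2]])
  then have "range G \<subseteq> I \<longrightarrow> (\<Union>j. G j) \<in> I" by (rule spec)
  then show "(\<Union>j. G j) \<in> I" using G by (rule mp)
next
  fix S T assume h: "S \<in> I" "T \<in> M" "T \<subseteq> S"
  have "\<forall>S\<in>I. \<forall>T\<in>M. T \<subseteq> S \<longrightarrow> T \<in> I"
    using assms unfolding sigma_ideal_def by (rule conjunct2[OF conjunct2[OF conjunct2]])
  then show "T \<in> I" using h by blast
qed

lemma sigma_idealI:
  assumes "I \<subseteq> M" "I \<noteq> {}"
    "\<And>G :: nat \<Rightarrow> _. range G \<subseteq> I \<Longrightarrow> (\<Union>j. G j) \<in> I"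
    "\<And>S T. S \<in> I \<Longrightarrow> T \<in> M \<Longrightarrow> T \<subseteq> S \<Longrightarrow> T \<in> I"
  shows "sigma_ideal M I"
  unfolding sigma_ideal_def using assms by blast



lemma RN_sigma_finite:
  assumes sa: "sigma_algebra E M" and tm: "sigma_maxitive M \<tau>"
    and rn: "radon_nikodym_property E M \<tau>"
  shows "maxitive_sigma_finite E M \<tau>"
proof -
  interpret sigma_algebra E M by (rule sa)
  define I where "I = {B\<in>M. \<exists>C. countable C \<and> C \<subseteq> {A\<in>M. \<tau> A < \<infinity>} \<and> B \<subseteq> \<Union>C}"
  define \<nu> where "\<nu> = (\<lambda>B. if B \<in> I then 0 else 1::ennreal)"
  have Isub: "B \<in> I" if h: "B \<in> M" "B \<subseteq> B'" "B' \<in> I" for B B'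
  proof -
    obtain C where C: "countable C" "C \<subseteq> {A\<in>M. \<tau> A < \<infinity>}" "B' \<subseteq> \<Union>C"
      using h(3) unfolding I_def by auto
    have "B \<subseteq> \<Union>C" using h(2) C(3) by (rule order_trans)
    then show ?thesis using C(1,2) h(1) unfolding I_def by auto
  qed
  have Iun: "(\<Union>j. F j) \<in> I" if "range F \<subseteq> I" for F :: "nat \<Rightarrow> _"
  proof -
    have "\<forall>j. \<exists>C. countable C \<and> C \<subseteq> {A\<in>M. \<tau> A < \<infinity>} \<and> F j \<subseteq> \<Union>C"
    proof
      fix j have "F j \<in> I" using that by auto
      then show "\<exists>C. countable C \<and> C \<subseteq> {A\<in>M. \<tau> A < \<infinity>} \<and> F j \<subseteq> \<Union>C"
        unfolding I_def by simp
    qed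
    then have "\<exists>C. \<forall>j. countable (C j) \<and> C j \<subseteq> {A\<in>M. \<tau> A < \<infinity>} \<and> F j \<subseteq> \<Union>(C j)"
      by (rule choice)
    then obtain C where C: "\<forall>j. countable (C j) \<and> C j \<subseteq> {A\<in>M. \<tau> A < \<infinity>} \<and> F j \<subseteq> \<Union>(C j)"
      by (rule exE)
    have "range F \<subseteq> M" using that unfolding I_def by auto
    then have "(\<Union>j. F j) \<in> M" by (rule countable_nat_UN)
    moreover have "countable (\<Union>j. C j)" using C by auto
    moreover have "(\<Union>j. C j) \<subseteq> {A\<in>M. \<tau> A < \<infinity>}" using C by auto
    moreover have "(\<Union>j. F j) \<subseteq> \<Union>(\<Union>j. C j)"
    proof
      fix x assume "x \<in> (\<Union>j. F j)"
      then obtain j where j: "x \<in> F j" by auto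
      moreover have "F j \<subseteq> \<Union>(C j)" using spec[OF C, of j] by (elim conjE)
      ultimately have "x \<in> \<Union>(C j)" by (rule subsetD[rotated])
      then show "x \<in> \<Union>(\<Union>j. C j)" by auto
    qed
    ultimately show ?thesis unfolding I_def by auto
  qed
  have emptyI: "{} \<in> I" unfolding I_def by auto
  have sm: "sigma_maxitive M \<nu>"
    unfolding sigma_maxitive_def
  proof (intro conjI allI impI)
    show "\<nu> {} = 0" using emptyI by (simp add: \<nu>_def)
    fix F :: "nat \<Rightarrow> _" assume F: "range F \<subseteq> M"
    show "\<nu> (\<Union>j. F j) = (SUP j. \<nu> (F j))"
    proof (cases "range F \<subseteq> I")
      case True
      have "\<nu> (F j) = 0" for j using True by (auto simp: \<nu>_def)
      then show ?thesis using Iun[OF True] by (simp add: \<nu>_def)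
    next
      case False
      then obtain k where k: "F k \<notin> I" by auto
      have "(\<Union>j. F j) \<notin> I" using Isub[of "F k" "\<Union>j. F j"] k F by auto
      then have "\<nu> (\<Union>j. F j) = 1" by (simp add: \<nu>_def)
      moreover have "(SUP j. \<nu> (F j)) = 1"
      proof (rule antisym)
        show "(SUP j. \<nu> (F j)) \<le> 1" by (rule SUP_least) (simp add: \<nu>_def)
        have "\<nu> (F k) = 1" using k by (simp add: \<nu>_def)
        then show "1 \<le> (SUP j. \<nu> (F j))" by (metis SUP_upper UNIV_I)
      qed
      ultimately show ?thesis by simp
    qed
  qed
  have ac: "abs_cont M \<nu> \<tau>"
    unfolding abs_cont_def
  proof (intro ballI impI)
    fix B assume "B \<in> M" "\<tau> B < \<infinity>"
    then have "B \<in> I" unfolding I_def by (intro CollectI conjI exI[of _ "{B}"]) auto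
    then show "\<nu> B \<le> \<infinity> * \<tau> B" by (simp add: \<nu>_def)
  qed
  obtain c where meas: "maxitive_measurable E M c" and eq: "\<And>B. B \<in> M \<Longrightarrow> \<nu> B = shilkret E \<tau> c B"
    using rnD[OF rn sm ac] by auto
  define A where "A = (\<lambda>t. {x\<in>E. t < c x})"
  have AM: "A t \<in> M" if "t < \<infinity>" for t unfolding A_def by (rule mmD[OF meas that])
  define tn where "tn = (\<lambda>n::nat. ennreal (inverse (real (Suc n))))"
  have fin: "\<tau> (A (tn n)) < \<infinity>" for n
  proof (rule ccontr)
    assume "\<not> \<tau> (A (tn n)) < \<infinity>"
    then have inf: "\<tau> (A (tn n)) = \<infinity>" by (metis less_top infinity_ennreal_def)
    have mem: "tn n \<in> {t. t < \<infinity>}" by (simp add: tn_def)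
    have "tn n * \<tau> (E \<inter> {x\<in>E. tn n < c x}) \<le> shilkret E \<tau> c E"
      unfolding shilkret_def by (rule SUP_upper[OF mem])
    moreover have "E \<inter> {x\<in>E. tn n < c x} = A (tn n)" by (auto simp: A_def)
    moreover have "shilkret E \<tau> c E = \<nu> E" using eq[OF top] by (rule sym)
    moreover have "\<nu> E \<le> 1" by (simp add: \<nu>_def)
    ultimately have "tn n * \<tau> (A (tn n)) \<le> 1" by (metis order_trans)
    moreover have "tn n * \<tau> (A (tn n)) = \<infinity>" using inf by (simp add: tn_def ennreal_mult_eq_top_iff)
    ultimately show False by (simp add: top_unique)
  qed
  have z: "E - A 0 \<in> I"
  proof -
    have "E - A 0 \<in> M" using AM[of 0] by auto
    moreover have "shilkret E \<tau> c (E - A 0) = 0"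
    proof -
      have "(E - A 0) \<inter> {x\<in>E. t < c x} = {}" for t
        by (auto simp: A_def) (metis le_less_trans zero_le)
      then show ?thesis unfolding shilkret_def using sm_empty[OF tm] by (simp add: SUP_constant) (metis ennreal_zero_less_top empty_iff mem_Collect_eq)
    qed
    ultimately have "\<nu> (E - A 0) = 0" using eq by simp
    then show ?thesis by (simp add: \<nu>_def split: if_splits)
  qed
  then obtain C0 where C0: "countable C0" "C0 \<subseteq> {A\<in>M. \<tau> A < \<infinity>}" "E - A 0 \<subseteq> \<Union>C0"
    unfolding I_def by blast
  define Cf where "Cf = insert {} (C0 \<union> range (\<lambda>n. A (tn n)))"
  have Cf1: "countable Cf" "Cf \<noteq> {}" using C0 by (auto simp: Cf_def)
  have Cf2: "Cf \<subseteq> {A\<in>M. \<tau> A < \<infinity>}" using C0 fin AM sm_empty[OF tm]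
    by (auto simp: Cf_def tn_def)
  have Cf3: "E \<subseteq> \<Union>Cf"
  proof
    fix x assume x: "x \<in> E"
    show "x \<in> \<Union>Cf"
    proof (cases "0 < c x")
      case False
      then have "x \<in> E - A 0" using x by (simp add: A_def)
      then obtain X where "X \<in> C0" "x \<in> X" using C0(3) by blast
      moreover have "X \<in> Cf" using \<open>X \<in> C0\<close> by (simp add: Cf_def)
      ultimately show ?thesis by blast
    next
      case True
      obtain r :: rat where r: "0 < ennreal (real_of_rat r)" "ennreal (real_of_rat r) < c x"
        using ennreal_rat_dense[OF True] by blast
      have rpos: "0 < real_of_rat r" using r(1) by simp
      obtain n where n: "n > 0" "inverse (real n) < real_of_rat r"
        using ex_inverse_of_nat_less[OF rpos] by blast
      have "inverse (real (Suc n)) \<le> inverse (real n)" using n(1) by (simp add: field_simps)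
      then have "inverse (real (Suc n)) < real_of_rat r" using n(2) by linarith
      then have "tn n < ennreal (real_of_rat r)" unfolding tn_def
        by (subst ennreal_less_iff) auto
      then have "tn n < c x" using r(2) by (rule order_less_trans)
      then have "x \<in> A (tn n)" using x by (simp add: A_def)
      moreover have "A (tn n) \<in> Cf" by (simp add: Cf_def)
      ultimately show ?thesis by blast
    qed
  qed
  have rr: "range (from_nat_into Cf) = Cf" using Cf1 by simp
  show ?thesis unfolding maxitive_sigma_finite_def
  proof (intro exI conjI allI)
    show "range (from_nat_into Cf) \<subseteq> M" using Cf2 rr by auto
    show "E \<subseteq> (\<Union>n. from_nat_into Cf n)" using Cf3 rr by simp
    fix n show "\<tau> (from_nat_into Cf n) < \<infinity>"
      using Cf2 from_nat_into[OF Cf1(2), of n] by auto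
  qed
qed



lemma RN_sigma_principal:
  assumes sa: "sigma_algebra E M" and tm: "sigma_maxitive M \<tau>"
    and rn: "radon_nikodym_property E M \<tau>"
  shows "sigma_principal M \<tau>"
proof -
  interpret sigma_algebra E M by (rule sa)
  have "\<exists>F :: nat \<Rightarrow> _. range F \<subseteq> M \<and> (\<forall>n. \<tau> (F n) < \<infinity>) \<and> E \<subseteq> (\<Union>n. F n)"
    using RN_sigma_finite[OF sa tm rn] unfolding maxitive_sigma_finite_def .
  then obtain F :: "nat \<Rightarrow> _" where F0: "range F \<subseteq> M \<and> (\<forall>n. \<tau> (F n) < \<infinity>) \<and> E \<subseteq> (\<Union>n. F n)"
    by (rule exE)
  have FM: "\<And>n. F n \<in> M" using F0 by auto
  have Ffin: "\<And>n. \<tau> (F n) < \<infinity>" using F0 by auto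
  have Fcov: "E \<subseteq> (\<Union>n. F n)" using F0 by auto
  show ?thesis unfolding sigma_principal_def
  proof (intro allI impI)
    fix I assume I: "sigma_ideal M I"
    note IM = siD(1)[OF I] and Inon = siD(2)[OF I] and Iun = siD(3)[OF I] and Isub = siD(4)[OF I]
    obtain S1 where S1: "S1 \<in> I" using Inon by blast
    define cov where "cov B \<longleftrightarrow> (\<exists>S\<in>I. \<exists>N\<in>M. \<tau> N = 0 \<and> B \<subseteq> S \<union> N)" for B
    define \<nu> where "\<nu> B = (if \<tau> B = 0 then 0 else if cov B then 1 else \<infinity>::ennreal)" for B
    have cov_null: "cov B" if "\<tau> B = 0" "B \<in> M" for B
      unfolding cov_def using that S1 by blast
    have cov_I: "cov B" if "B \<subseteq> S" "S \<in> I" for B S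
      unfolding cov_def using that sm_empty[OF tm] by blast
    have cov_sub: "cov B" if "cov B'" "B \<subseteq> B'" for B B'
      using that unfolding cov_def by blast
    have cov_un: "cov (\<Union>j. G j)" if G: "\<And>j. cov (G j)" for G :: "nat \<Rightarrow> _"
    proof -
      have "\<forall>j. \<exists>SN. fst SN \<in> I \<and> snd SN \<in> M \<and> \<tau> (snd SN) = 0 \<and> G j \<subseteq> fst SN \<union> snd SN"
      proof
        fix j
        obtain S N where "S \<in> I" "N \<in> M" "\<tau> N = 0" "G j \<subseteq> S \<union> N"
          using G[of j] unfolding cov_def by blast
        then show "\<exists>SN. fst SN \<in> I \<and> snd SN \<in> M \<and> \<tau> (snd SN) = 0 \<and> G j \<subseteq> fst SN \<union> snd SN"
          by (intro exI[of _ "(S, N)"]) simp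
      qed
      then have "\<exists>f. \<forall>j. fst (f j) \<in> I \<and> snd (f j) \<in> M \<and> \<tau> (snd (f j)) = 0 \<and> G j \<subseteq> fst (f j) \<union> snd (f j)"
        by (rule choice)
      then obtain f where f: "\<forall>j. fst (f j) \<in> I \<and> snd (f j) \<in> M \<and> \<tau> (snd (f j)) = 0 \<and> G j \<subseteq> fst (f j) \<union> snd (f j)"
        by (rule exE)
      have f1: "fst (f j) \<in> I" for j using spec[OF f, of j] by (elim conjE)
      have f2: "snd (f j) \<in> M" for j using spec[OF f, of j] by (elim conjE)
      have f3: "\<tau> (snd (f j)) = 0" for j using spec[OF f, of j] by (elim conjE)
      have f4: "G j \<subseteq> fst (f j) \<union> snd (f j)" for j using spec[OF f, of j] by (elim conjE)
      have "(\<Union>j. fst (f j)) \<in> I" using f1 by (intro Iun) auto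
      moreover have "(\<Union>j. snd (f j)) \<in> M" using f2 by (intro countable_nat_UN) auto
      moreover have "\<tau> (\<Union>j. snd (f j)) = 0"
        using sm_UN[OF tm, of "\<lambda>j. snd (f j)"] f2 f3 by auto
      moreover have "(\<Union>j. G j) \<subseteq> (\<Union>j. fst (f j)) \<union> (\<Union>j. snd (f j))"
        using f4 by blast
      ultimately show ?thesis unfolding cov_def by blast
    qed
    have sm: "sigma_maxitive M \<nu>"
      unfolding sigma_maxitive_def
    proof (intro conjI allI impI)
      show "\<nu> {} = 0" using sm_empty[OF tm] by (simp add: \<nu>_def)
      fix G :: "nat \<Rightarrow> _" assume G: "range G \<subseteq> M"
      have tU: "\<tau> (\<Union>j. G j) = (SUP j. \<tau> (G j))" by (rule sm_UN[OF tm G])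
      show "\<nu> (\<Union>j. G j) = (SUP j. \<nu> (G j))"
      proof (cases "\<tau> (\<Union>j. G j) = 0")
        case True
        then have "\<tau> (G j) = 0" for j using tU by (metis SUP_upper UNIV_I le_zero_eq)
        then show ?thesis using True by (simp add: \<nu>_def)
      next
        case False
        then obtain j0 where j0: "\<tau> (G j0) \<noteq> 0" using tU by (metis SUP_bot_conv(2) bot_ennreal)
        show ?thesis
        proof (cases "cov (\<Union>j. G j)")
          case True
          then have cj: "cov (G j)" for j by (rule cov_sub) auto
          have "\<nu> (\<Union>j. G j) = 1" using True False by (simp add: \<nu>_def)
          moreover have "(SUP j. \<nu> (G j)) = 1"
          proof (rule antisym)
            show "(SUP j. \<nu> (G j)) \<le> 1" by (rule SUP_least) (simp add: \<nu>_def cj)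
            have "\<nu> (G j0) = 1" using j0 cj by (simp add: \<nu>_def)
            then show "1 \<le> (SUP j. \<nu> (G j))" by (metis SUP_upper UNIV_I)
          qed
          ultimately show ?thesis by simp
        next
          case nc: False
          obtain k where k: "\<not> cov (G k)" using nc cov_un by blast
          have "\<tau> (G k) \<noteq> 0" using k cov_null G by auto
          then have "\<nu> (G k) = \<infinity>" using k by (simp add: \<nu>_def)
          then have b: "(SUP j. \<nu> (G j)) = \<infinity>" by (metis SUP_upper UNIV_I top_unique infinity_ennreal_def)
          have a: "\<nu> (\<Union>j. G j) = \<infinity>" using nc False by (simp add: \<nu>_def)
          show ?thesis by (rule trans[OF a sym[OF b]])
        qed
      qed
    qed
    have ac: "abs_cont M \<nu> \<tau>"
      unfolding abs_cont_def
    proof (intro ballI impI)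
      fix B assume "B \<in> M" "\<tau> B < \<infinity>"
      show "\<nu> B \<le> \<infinity> * \<tau> B"
      proof (cases "\<tau> B = 0")
        case True then show ?thesis by (simp add: \<nu>_def)
      next
        case False then show ?thesis by (simp add: ennreal_top_mult)
      qed
    qed
    obtain c where meas: "maxitive_measurable E M c" and eq0: "\<forall>B\<in>M. \<nu> B = shilkret E \<tau> c B"
      using rnD[OF rn sm ac] by blast
    have eq: "\<nu> B = shilkret E \<tau> c B" if "B \<in> M" for B using eq0 that by blast
    define A where "A t = {x\<in>E. t < c x}" for t
    have AM: "A t \<in> M" if "t < \<infinity>" for t unfolding A_def by (rule mmD[OF meas that])
    define D where "D n m = (E - A (of_nat n)) \<inter> F m" for n :: nat and m
    have DM: "D n m \<in> M" for n m unfolding D_def using AM[of "of_nat n"] FM[of m]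
      by (intro Int Diff top) (auto simp: of_nat_less_top)
    have covD: "cov (D n m)" for n m
    proof -
      have bnd: "t * \<tau> (D n m \<inter> {x\<in>E. t < c x}) \<le> of_nat n * \<tau> (F m)" if t: "t \<in> {t. t < \<infinity>}" for t
      proof (cases "of_nat n \<le> t")
        case True
        have "D n m \<inter> {x\<in>E. t < c x} = {}"
        proof (rule ccontr)
          assume "D n m \<inter> {x\<in>E. t < c x} \<noteq> {}"
          then obtain x where x: "x \<in> E" "\<not> of_nat n < c x" "t < c x" by (auto simp: D_def A_def)
          then show False using True by (meson le_less_trans)
        qed
        then show ?thesis using sm_empty[OF tm] by simp
      next
        case False
        have tt: "t \<le> of_nat n" using False by simp
        have "D n m \<inter> {x\<in>E. t < c x} \<in> M" using DM AM[of t] t unfolding A_def by auto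
        moreover have "D n m \<inter> {x\<in>E. t < c x} \<subseteq> F m" by (auto simp: D_def)
        ultimately have "\<tau> (D n m \<inter> {x\<in>E. t < c x}) \<le> \<tau> (F m)" using sm_mono[OF tm _ FM] by blast
        then show ?thesis using tt by (intro mult_mono) auto
      qed
      have "\<nu> (D n m) = shilkret E \<tau> c (D n m)" by (rule eq[OF DM])
      also have "\<dots> \<le> of_nat n * \<tau> (F m)" unfolding shilkret_def using bnd by (rule SUP_least)
      also have "\<dots> < \<infinity>" using Ffin[of m] by (simp add: ennreal_mult_less_top of_nat_less_top)
      finally have "\<nu> (D n m) \<noteq> \<infinity>" by simp
      then show ?thesis using cov_null[OF _ DM] unfolding \<nu>_def by (auto split: if_splits)
    qed
    define Fin where "Fin = (\<Union>n. \<Union>m. D n m)"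
    have FinM: "Fin \<in> M" unfolding Fin_def using DM by (intro countable_nat_UN) auto
    have "cov Fin" unfolding Fin_def by (intro cov_un covD)
    then obtain S0 N0 where S0: "S0 \<in> I" and N0: "N0 \<in> M" "\<tau> N0 = 0" and FS: "Fin \<subseteq> S0 \<union> N0"
      unfolding cov_def by blast
    show "\<exists>L\<in>I. \<forall>S\<in>I. negligible_wrt M \<tau> (S - L)"
    proof (intro bexI[OF _ S0] ballI)
      fix S assume S: "S \<in> I"
      define X where "X = S - Fin"
      have SM: "S \<in> M" using S IM by auto
      have XM: "X \<in> M" unfolding X_def using SM FinM by auto
      have Xinf: "c x = \<infinity>" if x: "x \<in> X" for x
      proof -
        have xE: "x \<in> E" using x SM sets_into_space unfolding X_def by auto
        then obtain m where m: "x \<in> F m" using Fcov by auto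
        have "of_nat n < c x" for n
        proof -
          have "x \<notin> D n m" using x unfolding X_def Fin_def by auto
          then show ?thesis using xE m unfolding D_def A_def by auto
        qed
        then show ?thesis
          by (metis ennreal_Ex_less_of_nat infinity_ennreal_def less_asym top.not_eq_extremum)
      qed
      have "\<tau> X = 0"
      proof (rule ccontr)
        assume X0: "\<tau> X \<noteq> 0"
        have "cov X" using S by (intro cov_I[of X S]) (auto simp: X_def)
        then have "\<nu> X = 1" using X0 by (simp add: \<nu>_def)
        moreover have "shilkret E \<tau> c X = \<infinity>"
        proof -
          have "X \<inter> {x\<in>E. t < c x} = X" if "t \<in> {t. t < \<infinity>}" for t
            using that Xinf XM sets_into_space by auto
          then have "shilkret E \<tau> c X = (SUP t\<in>{t. t < \<infinity>}. t * \<tau> X)"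
            unfolding shilkret_def by (intro SUP_cong) auto
          also have "\<dots> = \<infinity>" using X0 by (intro SUP_top_mult) (simp add: zero_less_iff_neq_zero)
          finally show ?thesis .
        qed
        ultimately show False using eq[OF XM] by simp
      qed
      then have "\<tau> (X \<union> N0) = 0" using sm_Un[OF tm XM N0(1)] N0(2) by simp
      moreover have "S - S0 \<subseteq> X \<union> N0" using FS unfolding X_def by blast
      moreover have "X \<union> N0 \<in> M" using XM N0 by auto
      ultimately show "negligible_wrt M \<tau> (S - S0)" unfolding negligible_wrt_def by blast
    qed
  qed
qed



lemma spD:
  assumes "sigma_principal M \<tau>" "sigma_ideal M I"
  shows "\<exists>L\<in>I. \<forall>S\<in>I. negligible_wrt M \<tau> (S - L)"
proof -
  have "sigma_ideal M I \<longrightarrow> (\<exists>L\<in>I. \<forall>S\<in>I. negligible_wrt M \<tau> (S - L))"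
    using assms(1) unfolding sigma_principal_def by (rule spec)
  then show ?thesis using assms(2) by (rule mp)
qed

locale RNS =
  fixes E :: "'a set" and M :: "'a set set" and \<tau> \<nu> :: "'a set \<Rightarrow> ennreal" and F :: "nat \<Rightarrow> 'a set"
  assumes sa: "sigma_algebra E M" and tm: "sigma_maxitive M \<tau>" and nm: "sigma_maxitive M \<nu>"
    and ac: "abs_cont M \<nu> \<tau>" and FM: "\<And>n. F n \<in> M" and Ffin: "\<And>n. \<tau> (F n) < \<infinity>"
    and Fcov: "E \<subseteq> (\<Union>n. F n)" and sp: "sigma_principal M \<tau>"
begin

sublocale S: sigma_algebra E M by (rule sa)

lemma acD: assumes "B \<in> M" "\<tau> B = 0" shows "\<nu> B = 0"
proof -
  have "\<forall>B\<in>M. \<tau> B < \<infinity> \<longrightarrow> \<nu> B \<le> \<infinity> * \<tau> B" using ac unfolding abs_cont_def .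
  then have "\<tau> B < \<infinity> \<longrightarrow> \<nu> B \<le> \<infinity> * \<tau> B" using assms(1) by (rule bspec)
  then have "\<nu> B \<le> \<infinity> * \<tau> B" using assms(2) by simp
  then show ?thesis using assms(2) by simp
qed

lemma negl0: assumes "negligible_wrt M \<tau> X" "X \<in> M" shows "\<tau> X = 0"
proof -
  obtain B where B: "B \<in> M" "\<tau> B = 0" "X \<subseteq> B" using assms(1) unfolding negligible_wrt_def by blast
  have "\<tau> X \<le> \<tau> B" by (rule sm_mono[OF tm assms(2) B(1) B(3)])
  then show ?thesis using B(2) by simp
qed

definition J where "J t = {B\<in>M. \<forall>C\<in>M. C \<subseteq> B \<longrightarrow> \<nu> C \<le> t * \<tau> C}"
definition Qp where "Qp = {q::real. q \<in> \<rat> \<and> 0 < q}"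
definition L where "L q = (SOME L. L \<in> J (ennreal q) \<and> (\<forall>S\<in>J (ennreal q). negligible_wrt M \<tau> (S - L)))"
definition c where "c x = (INF q\<in>{q\<in>Qp. x \<in> L q}. ennreal q)"
definition U where "U r = (\<Union>q\<in>{q\<in>Qp. q < r}. L q)"
definition A where "A t = {x\<in>E. t < c x}"

lemma JD: "B \<in> J t \<Longrightarrow> C \<in> M \<Longrightarrow> C \<subseteq> B \<Longrightarrow> \<nu> C \<le> t * \<tau> C"
  unfolding J_def by blast

lemma JM: "B \<in> J t \<Longrightarrow> B \<in> M"
  unfolding J_def by blast

lemma J_ideal: "sigma_ideal M (J t)"
proof (rule sigma_idealI)
  show "J t \<subseteq> M" unfolding J_def by blast
  have "{} \<in> J t" unfolding J_def using sm_empty[OF nm] by auto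
  then show "J t \<noteq> {}" by blast
next
  fix S T assume "S \<in> J t" "T \<in> M" "T \<subseteq> S"
  then show "T \<in> J t" unfolding J_def by auto
next
  fix G :: "nat \<Rightarrow> _" assume G: "range G \<subseteq> J t"
  have GM: "G j \<in> M" for j using G JM by blast
  have UM: "(\<Union>j. G j) \<in> M" using GM by (intro S.countable_nat_UN) auto
  have "\<nu> C \<le> t * \<tau> C" if C: "C \<in> M" "C \<subseteq> (\<Union>j. G j)" for C
  proof -
    have CG: "C \<inter> G j \<in> M" for j using C(1) GM by auto
    have "C = (\<Union>j. C \<inter> G j)" using C(2) by blast
    then have "\<nu> C = (SUP j. \<nu> (C \<inter> G j))" using sm_UN[OF nm, of "\<lambda>j. C \<inter> G j"] CG by auto
    also have "\<dots> \<le> t * \<tau> C"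
    proof (rule SUP_least)
      fix j
      have "\<nu> (C \<inter> G j) \<le> t * \<tau> (C \<inter> G j)" using G CG by (intro JD[of "G j"]) auto
      also have "\<dots> \<le> t * \<tau> C" using sm_mono[OF tm CG C(1)] by (intro mult_left_mono) auto
      finally show "\<nu> (C \<inter> G j) \<le> t * \<tau> C" .
    qed
    finally show ?thesis .
  qed
  then show "(\<Union>j. G j) \<in> J t" using UM unfolding J_def by blast
qed

lemma L_prop: "L q \<in> J (ennreal q) \<and> (\<forall>S\<in>J (ennreal q). negligible_wrt M \<tau> (S - L q))"
proof -
  have "\<exists>L\<in>J (ennreal q). \<forall>S\<in>J (ennreal q). negligible_wrt M \<tau> (S - L)"
    by (rule spD[OF sp J_ideal])
  then have "\<exists>L. L \<in> J (ennreal q) \<and> (\<forall>S\<in>J (ennreal q). negligible_wrt M \<tau> (S - L))" by blast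
  then show ?thesis unfolding L_def by (rule someI_ex)
qed

lemma LJ: "L q \<in> J (ennreal q)" using L_prop by blast
lemma Lneg: "S \<in> J (ennreal q) \<Longrightarrow> negligible_wrt M \<tau> (S - L q)" using L_prop by blast
lemma LM: "L q \<in> M" using LJ JM by blast
lemma LE: "L q \<subseteq> E" using LM S.sets_into_space by blast

lemma Qp_countable: "countable Qp"
  unfolding Qp_def by (rule countable_subset[OF _ countable_rat]) blast

lemma c1: "q \<in> Qp \<Longrightarrow> x \<in> L q \<Longrightarrow> c x \<le> ennreal q"
  unfolding c_def by (rule INF_lower) simp

lemma c2: assumes "c x < ennreal r" shows "\<exists>q\<in>Qp. q < r \<and> x \<in> L q"
proof -
  obtain q where q: "q \<in> {q\<in>Qp. x \<in> L q}" "ennreal q < ennreal r"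
    using assms unfolding c_def INF_less_iff by blast
  have "0 \<le> q" using q(1) unfolding Qp_def by auto
  then have "q < r" using q(2) ennreal_less_iff by blast
  then show ?thesis using q(1) by blast
qed

lemma U_M: "U r \<in> M"
  unfolding U_def using Qp_countable LM by (intro S.countable_UN') (auto intro: countable_subset)

lemma U_J: assumes "0 < r" shows "U r \<in> J (ennreal r)"
proof -
  have "\<nu> C \<le> ennreal r * \<tau> C" if C: "C \<in> M" "C \<subseteq> U r" for C
  proof -
    have "C = (\<Union>q\<in>{q\<in>Qp. q < r}. C \<inter> L q)" using C(2) unfolding U_def by blast
    moreover have "\<nu> (\<Union>q\<in>{q\<in>Qp. q < r}. C \<inter> L q) \<le> ennreal r * \<tau> C"
    proof (rule sm_countable[OF nm])
      show "countable {q\<in>Qp. q < r}" using Qp_countable by (auto intro: countable_subset)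
      fix q assume q: "q \<in> {q\<in>Qp. q < r}"
      show CL: "C \<inter> L q \<in> M" using C(1) LM by auto
      have "\<nu> (C \<inter> L q) \<le> ennreal q * \<tau> (C \<inter> L q)" by (rule JD[OF LJ CL]) blast
      also have "\<dots> \<le> ennreal r * \<tau> C"
        using q sm_mono[OF tm CL C(1)] by (intro mult_mono) (auto intro: ennreal_leI)
      finally show "\<nu> (C \<inter> L q) \<le> ennreal r * \<tau> C" .
    qed
    ultimately show ?thesis by simp
  qed
  then show ?thesis using U_M unfolding J_def by blast
qed

lemma c_lt_U: "c x < ennreal r \<Longrightarrow> x \<in> U r"
  using c2 unfolding U_def by blast

lemma A_eq: assumes "t < \<infinity>" shows "A t = (\<Union>r\<in>{r\<in>Qp. t < ennreal r}. E - U r)"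
proof (rule set_eqI, rule iffI)
  fix x assume x: "x \<in> A t"
  then have xE: "x \<in> E" and tc: "t < c x" unfolding A_def by auto
  obtain r :: rat where r: "t < ennreal (real_of_rat r)" "ennreal (real_of_rat r) < c x"
    using ennreal_rat_dense[OF tc] by blast
  have rpos: "0 < real_of_rat r" using r(1) by (metis ennreal_less_zero_iff le_less_trans zero_le)
  have rQ: "real_of_rat r \<in> Qp" unfolding Qp_def using rpos by (simp add: Rats_def)
  have "x \<notin> U (real_of_rat r)"
  proof
    assume "x \<in> U (real_of_rat r)"
    then obtain q where q: "q \<in> Qp" "q < real_of_rat r" "x \<in> L q" unfolding U_def by blast
    have "c x \<le> ennreal q" by (rule c1[OF q(1) q(3)])
    also have "\<dots> \<le> ennreal (real_of_rat r)" using q(2) by (intro ennreal_leI) simp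
    finally show False using r(2) by simp
  qed
  then show "x \<in> (\<Union>r\<in>{r\<in>Qp. t < ennreal r}. E - U r)" using xE rQ r(1) by blast
next
  fix x assume "x \<in> (\<Union>r\<in>{r\<in>Qp. t < ennreal r}. E - U r)"
  then obtain r where r: "r \<in> Qp" "t < ennreal r" "x \<in> E" "x \<notin> U r" by blast
  have "t < c x"
  proof (rule ccontr)
    assume "\<not> t < c x"
    then have "c x < ennreal r" using r(2) by (meson le_less_trans not_less)
    then show False using c_lt_U r(4) by blast
  qed
  then show "x \<in> A t" using r(3) unfolding A_def by blast
qed

lemma A_M: "t < \<infinity> \<Longrightarrow> A t \<in> M"
  unfolding A_eq using Qp_countable U_M
  by (intro S.countable_UN') (auto intro: countable_subset)

lemma c_meas: "maxitive_measurable E M c"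
  unfolding maxitive_measurable_def using A_M unfolding A_def by blast

end



context RNS begin

lemma key_ge:
  assumes C: "C \<in> M" "C \<subseteq> A t" and t: "t < \<infinity>"
  shows "t * \<tau> C \<le> \<nu> C"
proof (rule ccontr)
  assume "\<not> t * \<tau> C \<le> \<nu> C"
  then have lt: "\<nu> C < t * \<tau> C" by simp
  have CF: "C \<inter> F n \<in> M" for n using C(1) FM by auto
  have CE: "C \<subseteq> E" using C(1) S.sets_into_space by blast
  have "C = (\<Union>n. C \<inter> F n)" using CE Fcov by blast
  then have "\<tau> C = (SUP n. \<tau> (C \<inter> F n))" using sm_UN[OF tm, of "\<lambda>n. C \<inter> F n"] CF by auto
  then have teq: "t * \<tau> C = (SUP n. t * \<tau> (C \<inter> F n))" by (simp add: SUP_mult_left_ennreal)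
  have "\<nu> C < (SUP n. t * \<tau> (C \<inter> F n))" using lt unfolding teq .
  then obtain n where n: "\<nu> C < t * \<tau> (C \<inter> F n)" unfolding less_SUP_iff by blast
  define D where "D = C \<inter> F n"
  have DM: "D \<in> M" unfolding D_def by (rule CF)
  have DA: "D \<subseteq> A t" using C(2) unfolding D_def by blast
  have "\<nu> D \<le> \<nu> C" using sm_mono[OF nm DM C(1)] unfolding D_def by blast
  then have vD: "\<nu> D < t * \<tau> D" using n unfolding D_def by simp
  have "\<tau> D \<le> \<tau> (F n)" using sm_mono[OF tm DM FM] unfolding D_def by blast
  then have Dfin: "\<tau> D < \<infinity>" using Ffin[of n] by simp
  have "t * \<tau> D < \<infinity>" using t Dfin by (simp add: ennreal_mult_less_top)
  then have vfin: "\<nu> D < \<infinity>" using vD by simp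
  define a where "a = enn2real (\<tau> D)"
  define v where "v = enn2real (\<nu> D)"
  define tr where "tr = enn2real t"
  have a_eq: "\<tau> D = ennreal a" unfolding a_def using Dfin by simp
  have v_eq: "\<nu> D = ennreal v" unfolding v_def using vfin by simp
  have t_eq: "t = ennreal tr" unfolding tr_def using t by simp
  have a0: "0 \<le> a" "0 \<le> v" "0 \<le> tr" unfolding a_def v_def tr_def by auto
  have "ennreal v < ennreal (tr * a)" using vD a0 unfolding a_eq v_eq t_eq by (simp add: ennreal_mult)
  then have vlt: "v < tr * a" using a0 by (simp add: ennreal_less_iff)
  have apos: "0 < a"
  proof (rule ccontr)
    assume "\<not> 0 < a" then have "a = 0" using a0 by simp
    then show False using vlt a0 by simp
  qed
  have "v / a < tr" using vlt apos by (simp add: divide_less_eq mult.commute)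
  then obtain q where qQ: "q \<in> \<rat>" and q1: "v / a < q" and q2: "q < tr"
    using Rats_dense_in_real by blast
  have "0 \<le> v / a" using a0 by simp
  then have qpos: "0 < q" using q1 by linarith
  have "v < q * a" using q1 apos by (simp add: divide_less_eq)
  then have "v / q < a" using qpos by (simp add: divide_less_eq mult.commute)
  define w where "w = v / q"
  have wa: "w < a" unfolding w_def by fact
  define b where "b = (w + a) / 2"
  have b1a: "v / q < b" unfolding b_def w_def[symmetric] using wa by (simp add: field_simps)
  have b1b: "b < a" unfolding b_def using wa by (simp add: field_simps)
  note b1 = b1a b1b
  have "0 \<le> v / q" using a0 qpos by simp
  then have b0: "0 \<le> b" using b1 by linarith
  have vqb: "v < q * b" using b1(1) qpos by (simp add: divide_less_eq mult.commute)
  have qQp: "q \<in> Qp" unfolding Qp_def using qQ qpos by blast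
  define Z where "Z = {X\<in>M. \<tau> (X \<inter> D) \<le> ennreal b}"
  have Zi: "sigma_ideal M Z"
  proof (rule sigma_idealI)
    show "Z \<subseteq> M" unfolding Z_def by blast
    have "{} \<in> Z" unfolding Z_def using sm_empty[OF tm] by auto
    then show "Z \<noteq> {}" by blast
  next
    fix S T assume h: "S \<in> Z" "T \<in> M" "T \<subseteq> S"
    have SM: "S \<in> M" using h(1) unfolding Z_def by blast
    have "\<tau> (T \<inter> D) \<le> \<tau> (S \<inter> D)" using h SM DM by (intro sm_mono[OF tm]) auto
    also have "\<dots> \<le> ennreal b" using h(1) unfolding Z_def by blast
    finally show "T \<in> Z" using h(2) unfolding Z_def by blast
  next
    fix G :: "nat \<Rightarrow> _" assume G: "range G \<subseteq> Z"
    have GM: "G j \<in> M" for j using G unfolding Z_def by blast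
    have Gb: "\<tau> (G j \<inter> D) \<le> ennreal b" for j using G unfolding Z_def by blast
    have "(\<Union>j. G j) \<in> M" using GM by (intro S.countable_nat_UN) auto
    moreover have "\<tau> ((\<Union>j. G j) \<inter> D) \<le> ennreal b"
    proof -
      have "(\<Union>j. G j) \<inter> D = (\<Union>j. G j \<inter> D)" by blast
      moreover have "\<tau> (\<Union>j. G j \<inter> D) = (SUP j. \<tau> (G j \<inter> D))"
        using GM DM by (intro sm_UN[OF tm]) auto
      moreover have "(SUP j. \<tau> (G j \<inter> D)) \<le> ennreal b" using Gb by (rule SUP_least)
      ultimately show ?thesis by simp
    qed
    ultimately show "(\<Union>j. G j) \<in> Z" unfolding Z_def by blast
  qed
  obtain Lb where Lb: "Lb \<in> Z" and Lbneg: "\<And>S. S \<in> Z \<Longrightarrow> negligible_wrt M \<tau> (S - Lb)"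
    using spD[OF sp Zi] by blast
  have LbM: "Lb \<in> M" using Lb unfolding Z_def by blast
  define W where "W = D - Lb"
  have WM: "W \<in> M" unfolding W_def using DM LbM by auto
  have W0: "\<tau> W \<noteq> 0"
  proof
    assume W0: "\<tau> W = 0"
    have "D = (Lb \<inter> D) \<union> W" unfolding W_def by blast
    then have "\<tau> D = max (\<tau> (Lb \<inter> D)) (\<tau> W)" using sm_Un[OF tm, of "Lb \<inter> D" W] LbM DM WM by auto
    also have "\<dots> \<le> ennreal b" using Lb W0 unfolding Z_def by auto
    finally have "a \<le> b" using a_eq b0 by (simp add: ennreal_le_iff)
    then show False using b1(2) by simp
  qed
  have WL: "W \<inter> L q = {}"
  proof (rule ccontr)
    assume "W \<inter> L q \<noteq> {}"
    then obtain x where x: "x \<in> W" "x \<in> L q" by blast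
    have "t < c x" using x(1) DA unfolding W_def A_def by blast
    moreover have "c x \<le> ennreal q" by (rule c1[OF qQp x(2)])
    moreover have "ennreal q < t" using q2 qpos unfolding t_eq by (simp add: ennreal_less_iff)
    ultimately show False by simp
  qed
  have "W \<notin> J (ennreal q)"
  proof
    assume "W \<in> J (ennreal q)"
    then have "negligible_wrt M \<tau> (W - L q)" by (rule Lneg)
    moreover have "W - L q = W" using WL by blast
    ultimately have "\<tau> W = 0" using negl0 WM by simp
    then show False using W0 by simp
  qed
  then obtain X where X: "X \<in> M" "X \<subseteq> W" and Xv: "\<not> \<nu> X \<le> ennreal q * \<tau> X"
    using WM unfolding J_def by blast
  have X0: "\<tau> X \<noteq> 0"
  proof
    assume "\<tau> X = 0"
    then have "\<nu> X = 0" using acD X(1) by blast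
    then show False using Xv by simp
  qed
  have "X \<notin> Z"
  proof
    assume "X \<in> Z"
    then have "negligible_wrt M \<tau> (X - Lb)" by (rule Lbneg)
    moreover have "X - Lb = X" using X(2) unfolding W_def by blast
    ultimately have "\<tau> X = 0" using negl0 X(1) by simp
    then show False using X0 by simp
  qed
  then have "\<not> \<tau> (X \<inter> D) \<le> ennreal b" using X(1) unfolding Z_def by blast
  moreover have "X \<inter> D = X" using X(2) unfolding W_def by blast
  ultimately have Xb: "ennreal b < \<tau> X" by simp
  have "\<nu> X \<le> \<nu> D" using sm_mono[OF nm X(1) DM] X(2) unfolding W_def by blast
  also have "\<dots> = ennreal v" by (rule v_eq)
  also have "\<dots> < ennreal (q * b)" using vqb a0 by (simp add: ennreal_less_iff)
  also have "\<dots> = ennreal q * ennreal b" using qpos b0 by (simp add: ennreal_mult)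
  also have "\<dots> \<le> ennreal q * \<tau> X" using Xb by (intro mult_left_mono) auto
  finally show False using Xv by simp
qed

lemma ge: assumes B: "B \<in> M" shows "shilkret E \<tau> c B \<le> \<nu> B"
  unfolding shilkret_def
proof (rule SUP_least)
  fix t assume "t \<in> {t::ennreal. t < \<infinity>}"
  then have t: "t < \<infinity>" by simp
  have AtM: "A t \<in> M" by (rule A_M[OF t])
  have BA: "B \<inter> A t \<in> M" using B AtM by auto
  have "t * \<tau> (B \<inter> A t) \<le> \<nu> (B \<inter> A t)" using BA t by (intro key_ge) auto
  also have "\<dots> \<le> \<nu> B" using sm_mono[OF nm BA B] by blast
  finally show "t * \<tau> (B \<inter> {x\<in>E. t < c x}) \<le> \<nu> B" unfolding A_def .
qed

end



context RNS begin

lemma le_lam: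
  assumes B: "B \<in> M" and lam: "1 < lam"
  shows "\<nu> B \<le> ennreal lam * shilkret E \<tau> c B"
proof -
  define s where "s = shilkret E \<tau> c B"
  have BE: "B \<subseteq> E" using B S.sets_into_space by blast
  have sA: "t * \<tau> (B \<inter> A t) \<le> s" if t: "t < \<infinity>" for t
  proof -
    have "t \<in> {t::ennreal. t < \<infinity>}" using t by simp
    then have "t * \<tau> (B \<inter> {x\<in>E. t < c x}) \<le> s" unfolding s_def shilkret_def by (rule SUP_upper)
    then show ?thesis unfolding A_def .
  qed
  have lam0: "0 < lam" using lam by simp
  have s_le: "s \<le> ennreal lam * s"
  proof -
    have "(1::ennreal) \<le> ennreal lam" using lam by (simp add: ennreal_leI[of 1 lam, simplified])
    then have "1 * s \<le> ennreal lam * s" by (rule mult_right_mono) simp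
    then show ?thesis by simp
  qed
  define B0 where "B0 = B - A 0"
  have B0M: "B0 \<in> M" unfolding B0_def using B A_M[of 0] by auto
  have B0z: "\<nu> B0 = 0"
  proof -
    have Yz: "\<nu> (B0 \<inter> F n) = 0" for n
    proof -
      define Y where "Y = B0 \<inter> F n"
      have YM: "Y \<in> M" unfolding Y_def using B0M FM by auto
      have Yq: "\<nu> Y \<le> ennreal q * \<tau> (F n)" if q: "q \<in> Qp" for q
      proof -
        have qpos: "0 < q" using q unfolding Qp_def by simp
        have "Y \<subseteq> U q"
        proof
          fix x assume x: "x \<in> Y"
          then have "\<not> 0 < c x" unfolding Y_def B0_def A_def using BE by blast
          then have "c x = 0" by simp
          then have "c x < ennreal q" using qpos by simp
          then show "x \<in> U q" by (rule c_lt_U)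
        qed
        then have "\<nu> Y \<le> ennreal q * \<tau> Y" by (intro JD[OF U_J[OF qpos] YM])
        also have "\<dots> \<le> ennreal q * \<tau> (F n)"
          using sm_mono[OF tm YM FM, of n] unfolding Y_def by (intro mult_left_mono) auto
        finally show ?thesis .
      qed
      define K where "K = enn2real (\<tau> (F n))"
      have K_eq: "\<tau> (F n) = ennreal K" unfolding K_def using Ffin[of n] by simp
      have K0: "0 \<le> K" unfolding K_def by simp
      have one: "1 \<in> Qp" unfolding Qp_def by simp
      have "\<nu> Y = 0"
      proof (rule ccontr)
        assume nz: "\<nu> Y \<noteq> 0"
        have "\<nu> Y \<le> ennreal K" using Yq[OF one] unfolding K_eq by simp
        then have Yfin: "\<nu> Y < \<infinity>" by (simp add: le_less_trans)
        define y where "y = enn2real (\<nu> Y)"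
        have y_eq: "\<nu> Y = ennreal y" unfolding y_def using Yfin by simp
        have ypos: "0 < y" using nz y_eq by (metis ennreal_0 not_le ennreal_le_iff2 order.not_eq_order_implies_strict enn2real_nonneg y_def)
        show False
        proof (cases "K = 0")
          case True
          then show False using Yq[OF one] nz unfolding K_eq by simp
        next
          case False
          then have Kpos: "0 < K" using K0 by simp
          have "0 < y / K" using ypos Kpos by simp
          then obtain q where qQ: "q \<in> \<rat>" and q1: "0 < q" and q2: "q < y / K"
            using Rats_dense_in_real by blast
          have qQp: "q \<in> Qp" unfolding Qp_def using qQ q1 by blast
          have "q * K < y" using q2 Kpos by (simp add: less_divide_eq)
          have "ennreal y \<le> ennreal q * ennreal K" using Yq[OF qQp] unfolding K_eq y_eq .
          also have "\<dots> = ennreal (q * K)" using q1 K0 by (simp add: ennreal_mult)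
          finally have "ennreal y \<le> ennreal (q * K)" .
          then have "y \<le> q * K" using q1 K0 by (simp add: ennreal_le_iff)
          then show False using \<open>q * K < y\<close> by simp
        qed
      qed
      then show ?thesis unfolding Y_def .
    qed
    have "B0 = (\<Union>n. B0 \<inter> F n)" using B0M S.sets_into_space Fcov by blast
    moreover have "\<nu> (\<Union>n. B0 \<inter> F n) = (SUP n. \<nu> (B0 \<inter> F n))"
      using B0M FM by (intro sm_UN[OF nm]) auto
    ultimately show ?thesis using Yz by simp
  qed
  define Binf where "Binf = B - (\<Union>n. E - A (of_nat n))"
  have EA: "E - A (of_nat n) \<in> M" for n
    by (intro S.Diff S.top A_M) (simp add: of_nat_less_top)
  then have "range (\<lambda>n. E - A (of_nat n)) \<subseteq> M" by blast
  then have "(\<Union>n. E - A (of_nat n)) \<in> M" by (rule S.countable_nat_UN)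
  then have BinfM: "Binf \<in> M" unfolding Binf_def using B by (intro S.Diff)
  have Binf_c: "c x = \<infinity>" if x: "x \<in> Binf" for x
  proof -
    have xE: "x \<in> E" using x BE unfolding Binf_def by blast
    have "of_nat n < c x" for n using x xE unfolding Binf_def A_def by blast
    then show ?thesis
      by (metis ennreal_Ex_less_of_nat infinity_ennreal_def less_asym top.not_eq_extremum)
  qed
  have Binf_le: "\<nu> Binf \<le> s"
  proof (cases "\<tau> Binf = 0")
    case True then show ?thesis using acD[OF BinfM] by simp
  next
    case False
    have "t * \<tau> Binf \<le> s" if "t \<in> {t::ennreal. t < \<infinity>}" for t
    proof -
      have t: "t < \<infinity>" using that by simp
      have "Binf \<subseteq> B \<inter> A t"
      proof
        fix x assume x: "x \<in> Binf"
        then have "c x = \<infinity>" by (rule Binf_c)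
        then have "t < c x" using t by simp
        moreover have "x \<in> B" using x unfolding Binf_def by blast
        moreover have "x \<in> E" using \<open>x \<in> B\<close> BE by blast
        ultimately show "x \<in> B \<inter> A t" unfolding A_def by blast
      qed
      then have "\<tau> Binf \<le> \<tau> (B \<inter> A t)" using BinfM B A_M[OF t] by (intro sm_mono[OF tm]) auto
      then have "t * \<tau> Binf \<le> t * \<tau> (B \<inter> A t)" by (rule mult_left_mono) simp
      also have "\<dots> \<le> s" by (rule sA[OF t])
      finally show ?thesis .
    qed
    then have le1: "(SUP t\<in>{t::ennreal. t < \<infinity>}. t * \<tau> Binf) \<le> s" by (rule SUP_least)
    have eq1: "(SUP t\<in>{t::ennreal. t < \<infinity>}. t * \<tau> Binf) = \<infinity>"
      using False by (intro SUP_top_mult) (simp add: zero_less_iff_neq_zero)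
    have "\<infinity> \<le> s" using le1 unfolding eq1 .
    then have "s = \<infinity>" by (simp add: top_unique)
    then show ?thesis by simp
  qed
  define K where "K = {k. fst k \<in> Qp \<and> snd k \<in> Qp \<and> snd k \<le> lam * fst k}"
  have Kc: "countable K"
  proof (rule countable_subset)
    show "K \<subseteq> Qp \<times> Qp" unfolding K_def by auto
    show "countable (Qp \<times> Qp)" using Qp_countable by simp
  qed
  define G where "G k = B \<inter> U (snd k) \<inter> A (ennreal (fst k))" for k
  have Aen: "A (ennreal p) \<in> M" for p by (rule A_M) simp
  have GM: "G k \<in> M" for k unfolding G_def by (intro S.Int B U_M Aen)
  have Gle: "\<nu> (G k) \<le> ennreal lam * s" if k: "k \<in> K" for k
  proof -
    obtain p q where kpq: "k = (p, q)" by (cases k)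
    have p: "p \<in> Qp" and q: "q \<in> Qp" and qp: "q \<le> lam * p" using k unfolding K_def kpq by auto
    have ppos: "0 < p" and qpos: "0 < q" using p q unfolding Qp_def by auto
    have "G k \<subseteq> U q" unfolding G_def kpq by auto
    then have "\<nu> (G k) \<le> ennreal q * \<tau> (G k)" by (intro JD[OF U_J[OF qpos] GM])
    also have "\<dots> \<le> ennreal q * \<tau> (B \<inter> A (ennreal p))"
    proof -
      have "G k \<subseteq> B \<inter> A (ennreal p)" unfolding G_def kpq by auto
      then have "\<tau> (G k) \<le> \<tau> (B \<inter> A (ennreal p))" using GM B Aen[of p] by (intro sm_mono[OF tm]) auto
      then show ?thesis by (rule mult_left_mono) simp
    qed
    also have "\<dots> \<le> (ennreal lam * ennreal p) * \<tau> (B \<inter> A (ennreal p))"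
    proof -
      have "ennreal q \<le> ennreal (lam * p)" using qp by (rule ennreal_leI)
      also have "\<dots> = ennreal lam * ennreal p" using lam0 ppos by (simp add: ennreal_mult)
      finally show ?thesis by (rule mult_right_mono) simp
    qed
    also have "\<dots> = ennreal lam * (ennreal p * \<tau> (B \<inter> A (ennreal p)))" by (simp add: mult.assoc)
    also have "\<dots> \<le> ennreal lam * s" using sA[of "ennreal p"] by (intro mult_left_mono) auto
    finally show ?thesis .
  qed
  define Gall where "Gall = (\<Union>k\<in>K. G k)"
  have GallM: "Gall \<in> M" unfolding Gall_def using Kc GM by (intro S.countable_UN') auto
  have Gall_le: "\<nu> Gall \<le> ennreal lam * s" unfolding Gall_def
    using Kc GM Gle by (intro sm_countable[OF nm]) auto
  have cover: "B \<subseteq> B0 \<union> (Binf \<union> Gall)"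
  proof
    fix x assume xB: "x \<in> B"
    have xE: "x \<in> E" using xB BE by blast
    show "x \<in> B0 \<union> (Binf \<union> Gall)"
    proof (cases "x \<in> B0 \<or> x \<in> Binf")
      case True then show ?thesis by blast
    next
      case False
      then have "x \<in> A 0" using xB unfolding B0_def by blast
      then have c0: "0 < c x" unfolding A_def by blast
      from False obtain n where "x \<in> E - A (of_nat n)" using xB unfolding Binf_def by blast
      then have "c x \<le> of_nat n" unfolding A_def by auto
      then have cfin: "c x < \<infinity>" by (simp add: le_less_trans of_nat_less_top)
      define cx where "cx = enn2real (c x)"
      have cx_eq: "c x = ennreal cx" unfolding cx_def using cfin by simp
      have cxpos: "0 < cx" using c0 cx_eq by simp
      have "cx < lam * cx" using cxpos lam by simp
      then obtain q where qQ: "q \<in> \<rat>" and q1: "cx < q" and q2: "q < lam * cx"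
        using Rats_dense_in_real by blast
      have "q / lam < cx" using q2 lam0 by (simp add: divide_less_eq mult.commute)
      then obtain p where pQ: "p \<in> \<rat>" and p1: "q / lam < p" and p2: "p < cx"
        using Rats_dense_in_real by blast
      have qpos: "0 < q" using q1 cxpos by simp
      have "0 < q / lam" using qpos lam0 by simp
      then have ppos: "0 < p" using p1 by simp
      have qp: "q \<le> lam * p" using p1 lam0 by (simp add: divide_less_eq mult.commute)
      have kK: "(p, q) \<in> K" unfolding K_def Qp_def using pQ qQ ppos qpos qp by auto
      have "x \<in> A (ennreal p)" unfolding A_def using xE p2 ppos cx_eq by (simp add: ennreal_less_iff)
      moreover have "x \<in> U q" using cx_eq q1 cxpos by (intro c_lt_U) (simp add: ennreal_less_iff)
      ultimately have "x \<in> G (p, q)" unfolding G_def using xB by simp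
      then have "x \<in> Gall" unfolding Gall_def using kK by blast
      then show ?thesis by blast
    qed
  qed
  have UM: "B0 \<union> (Binf \<union> Gall) \<in> M" using B0M BinfM GallM by auto
  have "\<nu> B \<le> \<nu> (B0 \<union> (Binf \<union> Gall))" by (rule sm_mono[OF nm B UM cover])
  also have "\<dots> = max (\<nu> B0) (max (\<nu> Binf) (\<nu> Gall))"
  proof -
    have BG: "Binf \<union> Gall \<in> M" using BinfM GallM by auto
    show ?thesis by (simp only: sm_Un[OF nm B0M BG] sm_Un[OF nm BinfM GallM])
  qed
  also have "\<dots> \<le> ennreal lam * s"
    using B0z Binf_le s_le Gall_le by (simp add: order_trans)
  finally show ?thesis unfolding s_def .
qed

lemma le: assumes B: "B \<in> M" shows "\<nu> B \<le> shilkret E \<tau> c B"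
proof (rule ennreal_le_epsilon)
  fix e :: real assume sfin: "shilkret E \<tau> c B < top" and e: "0 < e"
  define sr where "sr = enn2real (shilkret E \<tau> c B)"
  have s_eq: "shilkret E \<tau> c B = ennreal sr" unfolding sr_def using sfin by simp
  have sr0: "0 \<le> sr" unfolding sr_def by simp
  define lam where "lam = 1 + e / (sr + 1)"
  have lam1: "1 < lam" unfolding lam_def using e sr0 by simp
  have "\<nu> B \<le> ennreal lam * ennreal sr" using le_lam[OF B lam1] unfolding s_eq .
  also have "\<dots> = ennreal (lam * sr)" using lam1 sr0 by (simp add: ennreal_mult)
  also have "\<dots> \<le> ennreal (sr + e)"
  proof (rule ennreal_leI)
    have "e * sr / (sr + 1) \<le> e" using e sr0 by (simp add: field_simps)
    then show "lam * sr \<le> sr + e" unfolding lam_def by (simp add: field_simps)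
  qed
  also have "\<dots> = shilkret E \<tau> c B + ennreal e" using sr0 e s_eq by (simp add: ennreal_plus)
  finally show "\<nu> B \<le> shilkret E \<tau> c B + ennreal e" .
qed

end



lemma sf_sp_RN:
  assumes sa: "sigma_algebra E M" and tm: "sigma_maxitive M \<tau>"
    and sf: "maxitive_sigma_finite E M \<tau>" and sp: "sigma_principal M \<tau>"
  shows "radon_nikodym_property E M \<tau>"
  unfolding radon_nikodym_property_def
proof (intro allI impI)
  fix \<nu> assume h: "sigma_maxitive M \<nu> \<and> abs_cont M \<nu> \<tau>"
  have nm: "sigma_maxitive M \<nu>" and ac: "abs_cont M \<nu> \<tau>" using h by simp_all
  have "\<exists>F :: nat \<Rightarrow> _. range F \<subseteq> M \<and> (\<forall>n. \<tau> (F n) < \<infinity>) \<and> E \<subseteq> (\<Union>n. F n)"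
    using sf unfolding maxitive_sigma_finite_def .
  then obtain F :: "nat \<Rightarrow> _" where F0: "range F \<subseteq> M \<and> (\<forall>n. \<tau> (F n) < \<infinity>) \<and> E \<subseteq> (\<Union>n. F n)"
    by (rule exE)
  have FM: "\<And>n. F n \<in> M" using F0 by auto
  have Ffin: "\<And>n. \<tau> (F n) < \<infinity>" using F0 by auto
  have Fcov: "E \<subseteq> (\<Union>n. F n)" using F0 by auto
  interpret R: RNS E M \<tau> \<nu> F
    by (rule RNS.intro[OF sa tm nm ac FM Ffin Fcov sp])
  have "\<forall>B\<in>M. \<nu> B = shilkret E \<tau> R.c B"
  proof
    fix B assume B: "B \<in> M"
    show "\<nu> B = shilkret E \<tau> R.c B" using R.le[OF B] R.ge[OF B] by (rule antisym)
  qed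
  then show "\<exists>c. maxitive_measurable E M c \<and> (\<forall>B\<in>M. \<nu> B = shilkret E \<tau> c B)"
    using R.c_meas by blast
qed

theorem mainTheorem2:
  fixes E :: "'a set" and M :: "'a set set" and \<tau> :: "'a set \<Rightarrow> ennreal"
  assumes "E \<noteq> {}"
    and "sigma_algebra E M"
    and "sigma_maxitive M \<tau>"
  shows "radon_nikodym_property E M \<tau> \<longleftrightarrow>
           (maxitive_sigma_finite E M \<tau> \<and> sigma_principal M \<tau>)"
proof
  assume rn: "radon_nikodym_property E M \<tau>"
  show "maxitive_sigma_finite E M \<tau> \<and> sigma_principal M \<tau>"
    using RN_sigma_finite[OF assms(2,3) rn] RN_sigma_principal[OF assms(2,3) rn] by (rule conjI)
next
  assume h: "maxitive_sigma_finite E M \<tau> \<and> sigma_principal M \<tau>"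
  show "radon_nikodym_property E M \<tau>"
    using sf_sp_RN[OF assms(2,3)] h by blast
qed


end
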